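(* Let $a\ge b\ge2$ be integers with $a/b\in\mathbb Z$, $\beta>1$ the positive root of $\beta^2=a\beta+b$, and $\beta'=a-\beta$. Then for each $n\in\mathbb N$, \[ \inf_{j\in\mathbb Z}P_{\mathbf h(j)}(\beta')\in\Big\{\mu_n+(\beta')^{2n}\tfrac{b-1}{1-(\beta')^2}\,t:\ t\in[\beta',0]\Big\}, \qquad \mu_n=\min_{j\in\{0,1,\dots,b^n-1\}}P_{\mathrm{Pref}_{2n}(\mathbf h(j))}(\beta'). \]
   Context: For an algebraic integer $\beta$, the $\beta$-adic expansion of $x\in\mathbb Z[\beta]$ is the unique infinite word $\mathbf h(x)=u_0u_1u_2\cdots$ with $u_n\in\{0,1,\dots,|N(\beta)|-1\}$ such that $x-\sum_{i=0}^{n-1}u_i\beta^i\in\beta^n\mathbb Z[\beta]$ for all $n\in\mathbb N$; here $|N(\beta)|=b$. $\mathrm{Pref}_n(\mathbf u)$ denotes the prefix of length $n$ of an infinite word $\mathbf u$. For a finite word $w=w_0\cdots w_{k-1}$, $P_w(X)=\sum_{i=0}^{k-1}w_iX^i$; for an infinite word, $P_{\mathbf u}(X)=\sum_{i\ge0}u_iX^i$. *)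

theory Defs
  imports Complex_Main
begin

definition Zbeta :: "real \<Rightarrow> real set" where
  "Zbeta \<beta> = {\<Sum>i<k. of_int (c i) * \<beta> ^ i | c k. True}"

text \<open>beta-adic expansion of x with digits in {0,...,D-1} (D = |N(beta)|):
  the unique digit sequence u with x - sum_{i<n} u_i beta^i in beta^n Z[beta] for all n.\<close>
definition beta_expansion :: "real \<Rightarrow> nat \<Rightarrow> real \<Rightarrow> (nat \<Rightarrow> nat)" where
  "beta_expansion \<beta> D x = (THE u. (\<forall>n. u n < D) \<and>
      (\<forall>n. \<exists>z\<in>Zbeta \<beta>. x - (\<Sum>i<n. real (u i) * \<beta> ^ i) = \<beta> ^ n * z))"

definition P_pref :: "(nat \<Rightarrow> nat) \<Rightarrow> nat \<Rightarrow> real \<Rightarrow> real" where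
  "P_pref u k X = (\<Sum>i<k. real (u i) * X ^ i)"

definition P_inf :: "(nat \<Rightarrow> nat) \<Rightarrow> real \<Rightarrow> real" where
  "P_inf u X = (\<Sum>i. real (u i) * X ^ i)"

end

theory Submission
  imports Defs
begin


definition stp :: "int \<Rightarrow> int \<Rightarrow> int \<times> int \<Rightarrow> int \<times> int" where
  "stp A B x = (snd x - A * (fst x div B), fst x div B)"

definition dg :: "int \<Rightarrow> int \<Rightarrow> nat \<Rightarrow> int \<times> int \<Rightarrow> int" where
  "dg A B n x = fst ((stp A B ^^ n) x) mod B"

definition Mst :: "int \<Rightarrow> int \<Rightarrow> int \<times> int \<Rightarrow> int \<times> int" where
  "Mst A c x = (fst x + A * c * fst x - A * snd x, snd x - c * fst x)"

lemma st_add: "(stp A B ^^ (m + n)) x = (stp A B ^^ m) ((stp A B ^^ n) x)"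
  by (simp add: funpow_add)

lemma L2:
  assumes B: "B > 0" and A: "A = B * c"
  shows "(stp A B ^^ 2) (p + B*t, q + B*s) = (fst ((stp A B ^^ 2) (p,q)) + fst (Mst A c (t,s)),
            snd ((stp A B ^^ 2) (p,q)) + snd (Mst A c (t,s)))"
    and "dg A B 0 (p + B*t, q + B*s) = dg A B 0 (p,q)"
    and "dg A B 1 (p + B*t, q + B*s) = dg A B 1 (p,q)"
proof -
  define k where "k = p div B"
  define q' where "q' = q - A * k"
  define k' where "k' = q' div B"
  have d1: "(p + B*t) div B = k + t" using B by (simp add: k_def)
  have e: "q + B * s - A * (k + t) = q' + B * (s - c*t)" using A by (simp add: algebra_simps q'_def)
  have d2: "(q' + B * (s - c*t)) div B = k' + (s - c*t)" using B by (simp add: k'_def)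
  have m2: "(q' + B * (s - c*t)) mod B = q' mod B" by simp
  have s2: "(stp A B ^^ 2) (p,q) = (k - A * k', k')"
    by (simp add: numeral_2_eq_2 stp_def k_def q'_def k'_def)
  have s2': "(stp A B ^^ 2) (p + B*t, q + B*s) = (k + t - A * (k' + (s - c*t)), k' + (s - c*t))"
    by (simp add: numeral_2_eq_2 stp_def d1 e d2)
  show "(stp A B ^^ 2) (p + B*t, q + B*s) = (fst ((stp A B ^^ 2) (p,q)) + fst (Mst A c (t,s)),
            snd ((stp A B ^^ 2) (p,q)) + snd (Mst A c (t,s)))"
    unfolding s2 s2' by (simp add: Mst_def algebra_simps A)
  show "dg A B 0 (p + B*t, q + B*s) = dg A B 0 (p,q)" by (simp add: dg_def)
  show "dg A B 1 (p + B*t, q + B*s) = dg A B 1 (p,q)"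
  proof -
    have "q + B * s - A * (p div B + t) = q' + B * (s - c*t)" using e by (simp add: k_def)
    then have "(q + B * s - A * ((p + B*t) div B)) mod B = q' mod B" using d1 m2 by (simp add: k_def)
    then show ?thesis by (simp add: dg_def stp_def q'_def k_def)
  qed
qed

lemma Mst_lin: "Mst A c (B^K * t, B^K * s) = (B^K * fst (Mst A c (t,s)), B^K * snd (Mst A c (t,s)))"
  by (simp add: Mst_def algebra_simps)

lemma LK:
  assumes B: "B > 0" and A: "A = B * c"
  shows "\<forall>p q t s. (stp A B ^^ (2*K)) (p + B^K*t, q + B^K*s) =
       (fst ((stp A B ^^ (2*K)) (p,q)) + fst ((Mst A c ^^ K) (t,s)),
        snd ((stp A B ^^ (2*K)) (p,q)) + snd ((Mst A c ^^ K) (t,s)))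
     \<and> (\<forall>i<2*K. dg A B i (p + B^K*t, q + B^K*s) = dg A B i (p,q))"
proof (induction K)
  case 0
  then show ?case by simp
next
  case (Suc K)
  show ?case
  proof (intro allI, rule conjI)
    fix p q t s
    obtain t' s' where ts: "Mst A c (t,s) = (t', s')" by (cases "Mst A c (t,s)") auto
    obtain p2 q2 where pq: "(stp A B ^^ 2) (p,q) = (p2,q2)" by (cases "(stp A B ^^ 2) (p,q)") auto
    have e1: "(p + B^Suc K*t, q + B^Suc K*s) = (p + B*(B^K*t), q + B*(B^K*s))" by simp
    have h2: "(stp A B ^^ 2) (p + B^Suc K*t, q + B^Suc K*s) = (p2 + B^K*t', q2 + B^K*s')"
      unfolding e1 L2(1)[OF B A] Mst_lin using ts pq by simp
    have sp: "\<And>y. (stp A B ^^ (2 * Suc K)) y = (stp A B ^^ (2*K)) ((stp A B ^^ 2) y)"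
      by (metis st_add mult_Suc_right add.commute)
    have MK: "(Mst A c ^^ Suc K) (t,s) = (Mst A c ^^ K) (t',s')"
      by (metis funpow_Suc_right comp_apply ts)
    show "(stp A B ^^ (2 * Suc K)) (p + B ^ Suc K * t, q + B ^ Suc K * s) =
        (fst ((stp A B ^^ (2 * Suc K)) (p, q)) + fst ((Mst A c ^^ Suc K) (t, s)),
         snd ((stp A B ^^ (2 * Suc K)) (p, q)) + snd ((Mst A c ^^ Suc K) (t, s)))"
      unfolding sp h2 pq MK using Suc.IH by blast
    show "\<forall>i<2 * Suc K. dg A B i (p + B ^ Suc K * t, q + B ^ Suc K * s) = dg A B i (p, q)"
    proof (intro allI impI)
      fix i assume i: "i < 2 * Suc K"
      show "dg A B i (p + B ^ Suc K * t, q + B ^ Suc K * s) = dg A B i (p, q)"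
      proof (cases "i < 2")
        case True
        then have "i = 0 \<or> i = 1" by auto
        then show ?thesis unfolding e1 using L2(2,3)[OF B A] by auto
      next
        case False
        have spi: "\<And>y. dg A B i y = dg A B (i-2) ((stp A B ^^ 2) y)"
          unfolding dg_def using False by (metis st_add le_add_diff_inverse2 not_less)
        show ?thesis unfolding spi h2 pq using Suc.IH i False by auto
      qed
    qed
  qed
qed

lemma Mst_mod: assumes A: "A = B * c" shows "fst ((Mst A c ^^ K) (t,s)) mod B = t mod B"
proof (induction K arbitrary: t s)
  case 0 then show ?case by simp
next
  case (Suc K)
  obtain t' s' where ts: "Mst A c (t,s) = (t', s')" by (cases "Mst A c (t,s)") auto
  have MK: "(Mst A c ^^ Suc K) (t,s) = (Mst A c ^^ K) (t',s')"
    by (metis funpow_Suc_right comp_apply ts)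
  have "t' = t + B * (c * c * t - c * s)" using ts A by (auto simp: Mst_def algebra_simps)
  then have "t' mod B = t mod B" by simp
  then show ?case unfolding MK using Suc.IH by simp
qed

lemma prefix_mod:
  assumes B: "B > 0" and A: "A = B * c" and i: "i < 2*n"
  shows "dg A B i (j,0) = dg A B i (j mod B^n, 0)"
proof -
  have "(j mod B^n + B^n * (j div B^n), 0 + B^n * 0) = (j, 0)" by simp
  then show ?thesis using LK[OF B A, of n] i by metis
qed

lemma construct:
  assumes B: "B > 0" and A: "A = B * c"
  shows "\<exists>j. (\<forall>i<2*n. dg A B i (j,0) = dg A B i (r,0)) \<and>
      (\<forall>i. 2*n \<le> i \<and> i < 2*n + 2*N \<and> even i \<longrightarrow> dg A B i (j,0) = 0)"
proof (induction N)
  case 0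
  then show ?case by auto
next
  case (Suc N)
  then obtain j where j1: "\<forall>i<2*n. dg A B i (j,0) = dg A B i (r,0)"
    and j2: "\<forall>i. 2*n \<le> i \<and> i < 2*n + 2*N \<and> even i \<longrightarrow> dg A B i (j,0) = 0" by blast
  define K where "K = n + N"
  define f where "f = fst ((stp A B ^^ (2*K)) (j,0))"
  define j' where "j' = j + B^K * (-f)"
  have eq: "(j', 0) = (j + B^K * (-f), 0 + B^K * 0)" by (simp add: j'_def)
  note LKi = LK[OF B A, of K, rule_format, where p=j and q=0 and t="-f" and s=0]
  have pres: "\<forall>i<2*K. dg A B i (j',0) = dg A B i (j,0)" using LKi eq by simp
  have "fst ((stp A B ^^ (2*K)) (j',0)) = f + fst ((Mst A c ^^ K) (-f,0))"
    using LKi eq by (simp add: f_def)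
  then have "dg A B (2*K) (j',0) = (f + fst ((Mst A c ^^ K) (-f,0))) mod B" by (simp add: dg_def)
  also have "\<dots> = (f + fst ((Mst A c ^^ K) (-f,0)) mod B) mod B" by (simp add: mod_add_right_eq)
  also have "\<dots> = (f + (-f) mod B) mod B" using Mst_mod[OF A] by simp
  also have "\<dots> = 0" by (simp add: mod_add_right_eq)
  finally have new: "dg A B (2*K) (j',0) = 0" .
  show ?case
  proof (intro exI conjI allI impI)
    fix i assume "i < 2*n" then show "dg A B i (j',0) = dg A B i (r,0)" using pres j1 K_def by auto
  next
    fix i assume "2 * n \<le> i \<and> i < 2 * n + 2 * Suc N \<and> even i"
    then have "(2*n \<le> i \<and> i < 2*n + 2*N \<and> even i) \<or> i = 2*K" unfolding K_def by presburger
    then show "dg A B i (j',0) = 0"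
    proof
      assume h: "2*n \<le> i \<and> i < 2*n + 2*N \<and> even i"
      then have "i < 2*K" using K_def by auto
      then show ?thesis using pres j2 h by auto
    qed (use new in auto)
  qed
qed




locale ctx =
  fixes a b :: nat and \<beta> \<beta>' :: real
  assumes ba: "b \<le> a" and b2: "2 \<le> b" and bdvd: "b dvd a"
    and b1: "\<beta> > 1" and beq: "\<beta>\<^sup>2 = real a * \<beta> + real b"
    and bp: "\<beta>' = real a - \<beta>"
begin

lemma beq': "\<beta> * \<beta> = real a * \<beta> + real b" using beq by (simp add: power2_eq_square)

lemma beta_gt: "real a < \<beta>"
proof -
  have "\<beta> * (\<beta> - a) = b" using beq' by (simp add: algebra_simps)
  then have "\<beta> * (\<beta> - a) > 0" using b2 by simp
  then show ?thesis using b1 by (simp add: zero_less_mult_iff)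
qed

lemma beta_lt: "\<beta> < real a + 1"
proof (rule ccontr)
  assume "\<not> ?thesis"
  then have h: "\<beta> - a \<ge> 1" by simp
  have "\<beta> * (\<beta> - a) = b" using beq' by (simp add: algebra_simps)
  moreover have "\<beta> * (\<beta> - a) \<ge> \<beta> * 1" using h b1 by (intro mult_left_mono) auto
  ultimately show False using ba beta_gt by simp
qed

lemma bp_eq: "\<beta>' = - real b / \<beta>"
proof -
  have "\<beta> * \<beta>' = \<beta> * a - \<beta> * \<beta>" by (simp add: bp right_diff_distrib)
  then have "\<beta> * \<beta>' = - real b" using beq' by simp
  then show ?thesis using b1 by (simp add: field_simps)
qed

lemma bp_neg: "\<beta>' < 0" and bp_gt: "-1 < \<beta>'"
proof -
  show "\<beta>' < 0" using bp beta_gt by simp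
  have "real b < \<beta>" using ba beta_gt by linarith
  then have "real b / \<beta> < 1" using b1 by simp
  then show "-1 < \<beta>'" unfolding bp_eq by simp
qed

lemma irrat: assumes "of_int p + of_int q * \<beta> = 0" shows "p = 0 \<and> q = 0"
proof (cases "q = 0")
  case True then show ?thesis using assms by simp
next
  case False
  define g where "g = gcd p q"
  have g0: "g \<noteq> 0" unfolding g_def using False by (simp only: gcd_eq_0_iff) simp
  obtain p1 q1 where pq: "p = p1 * g" "q = q1 * g" and cop: "coprime p1 q1"
    using gcd_coprime_exists[of p q] g0 unfolding g_def by blast
  have q10: "q1 \<noteq> 0" using pq False by auto
  have e1: "of_int q1 * \<beta> = - of_int p1"
  proof -
    have "of_int g * (of_int p1 + of_int q1 * \<beta>) = (0::real)" using assms pq by (simp add: algebra_simps)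
    then show ?thesis using g0 by simp
  qed
  have "(of_int q1 * \<beta>) * (of_int q1 * \<beta>) = of_int q1 * of_int q1 * (\<beta> * \<beta>)"
    by (simp add: algebra_simps)
  also have "\<dots> = of_int q1 * of_int q1 * (real a * \<beta> + real b)" using beq' by simp
  also have "\<dots> = of_int q1 * (real a * (of_int q1 * \<beta>) + of_int q1 * real b)" by (simp add: algebra_simps)
  finally have "of_int p1 * of_int p1 = of_int q1 * (of_int q1 * real b - real a * of_int p1)"
    unfolding e1 by simp
  then have "real_of_int (p1 * p1) = real_of_int (q1 * (q1 * int b - int a * p1))" by simp
  then have "p1 * p1 = q1 * (q1 * int b - int a * p1)" by (simp only: of_int_eq_iff)
  then have "q1 dvd p1 * p1" by simp
  moreover have "coprime q1 (p1 * p1)" using cop by (simp add: coprime_commute)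
  ultimately have "is_unit q1" using coprime_common_divisor dvd_refl by blast
  then have "q1 = 1 \<or> q1 = -1" by auto
  then have "\<beta> = of_int (- p1) \<or> \<beta> = of_int p1" using e1 by auto
  then obtain k :: int where bk: "\<beta> = of_int k" by blast
  have "real_of_int (int a) < of_int k" using beta_gt bk by simp
  then have "int a < k" by (simp only: of_int_less_iff)
  moreover have "real_of_int k < of_int (int a + 1)" using beta_lt bk by simp
  then have "k < int a + 1" by (simp only: of_int_less_iff)
  ultimately show ?thesis by simp
qed


definition val :: "int \<times> int \<Rightarrow> real" where "val x = of_int (fst x) + of_int (snd x) * \<beta>"

definition hh :: "int \<Rightarrow> nat \<Rightarrow> nat" where "hh j = (\<lambda>i. nat (dg (int a) (int b) i (j,0)))"

lemma B0: "int b > 0" using b2 by simp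

lemma step_val: "val x = of_int (fst x mod int b) + \<beta> * val (stp (int a) (int b) x)"
proof -
  obtain p q where x: "x = (p,q)" by (cases x)
  define k where "k = p div int b"
  have p: "p = int b * k + p mod int b" by (simp add: k_def)
  have "\<beta> * val (stp (int a) (int b) x) = \<beta> * (of_int (q - int a * k) + of_int k * \<beta>)"
    by (simp add: val_def stp_def x k_def)
  also have "\<dots> = of_int q * \<beta> - real a * of_int k * \<beta> + of_int k * (\<beta> * \<beta>)" by (simp add: algebra_simps)
  also have "\<dots> = of_int q * \<beta> + real b * of_int k" unfolding beq' by (simp add: algebra_simps)
  finally have "\<beta> * val (stp (int a) (int b) x) = of_int q * \<beta> + real b * of_int k" .
  moreover have "real_of_int p = real b * of_int k + of_int (p mod int b)"
    by (subst p) simp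
  ultimately show ?thesis by (simp add: val_def x)
qed

lemma exp_id: "val x = (\<Sum>i<n. of_int (dg (int a) (int b) i x) * \<beta>^i) + \<beta>^n * val ((stp (int a) (int b) ^^ n) x)"
proof (induction n arbitrary: x)
  case 0 then show ?case by simp
next
  case (Suc n)
  have dgS: "\<And>i. dg (int a) (int b) (Suc i) x = dg (int a) (int b) i (stp (int a) (int b) x)"
    by (simp only: dg_def funpow_Suc_right comp_apply)
  have stS: "(stp (int a) (int b) ^^ Suc n) x = (stp (int a) (int b) ^^ n) (stp (int a) (int b) x)"
    by (simp only: funpow_Suc_right comp_apply)
  have "val x = of_int (fst x mod int b) + \<beta> * val (stp (int a) (int b) x)" by (rule step_val)
  also have "\<dots> = of_int (dg (int a) (int b) 0 x) + \<beta> * ((\<Sum>i<n. of_int (dg (int a) (int b) i (stp (int a) (int b) x)) * \<beta>^i)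
      + \<beta>^n * val ((stp (int a) (int b) ^^ n) (stp (int a) (int b) x)))"
    by (subst Suc.IH[of "stp (int a) (int b) x"]) (simp add: dg_def)
  also have "\<dots> = (\<Sum>i<Suc n. of_int (dg (int a) (int b) i x) * \<beta>^i) + \<beta>^Suc n * val ((stp (int a) (int b) ^^ Suc n) x)"
  proof -
    have "(\<Sum>i<n. of_int (dg (int a) (int b) (Suc i) x) * \<beta>^Suc i) =
        \<beta> * (\<Sum>i<n. of_int (dg (int a) (int b) i (stp (int a) (int b) x)) * \<beta>^i)"
      unfolding dgS sum_distrib_left by (simp add: mult_ac)
    then show ?thesis unfolding sum.lessThan_Suc_shift stS by (simp add: distrib_left mult_ac)
  qed
  finally show ?case .
qed

lemma pow_lin: "\<exists>p q. \<beta>^i = of_int p + of_int q * \<beta>"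
proof (induction i)
  case 0 then show ?case by (intro exI[of _ 1] exI[of _ 0]) simp
next
  case (Suc i)
  then obtain p q where h: "\<beta>^i = of_int p + of_int q * \<beta>" by blast
  have "\<beta>^Suc i = of_int p * \<beta> + of_int q * (\<beta> * \<beta>)" by (simp add: h algebra_simps)
  also have "\<dots> = of_int (q * int b) + of_int (p + q * int a) * \<beta>" unfolding beq' by (simp add: algebra_simps)
  finally show ?case by blast
qed

lemma Zbeta_char: "z \<in> Zbeta \<beta> \<longleftrightarrow> (\<exists>p q. z = of_int p + of_int q * \<beta>)"
proof
  assume "z \<in> Zbeta \<beta>"
  then obtain c k where z: "z = (\<Sum>i<k. of_int (c i) * \<beta> ^ i)" unfolding Zbeta_def by blast
  have "\<exists>p q. (\<Sum>i<k. of_int (c i) * \<beta> ^ i) = of_int p + of_int q * \<beta>"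
  proof (induction k)
    case 0 then show ?case by (intro exI[of _ 0]) simp
  next
    case (Suc k)
    then obtain p q where h: "(\<Sum>i<k. of_int (c i) * \<beta> ^ i) = of_int p + of_int q * \<beta>" by blast
    obtain p' q' where h': "\<beta>^k = of_int p' + of_int q' * \<beta>" using pow_lin by blast
    have "(\<Sum>i<Suc k. of_int (c i) * \<beta> ^ i) = of_int (p + c k * p') + of_int (q + c k * q') * \<beta>"
      by (simp add: h h' algebra_simps)
    then show ?case by blast
  qed
  then show "\<exists>p q. z = of_int p + of_int q * \<beta>" using z by simp
next
  assume "\<exists>p q. z = of_int p + of_int q * \<beta>"
  then obtain p q where z: "z = of_int p + of_int q * \<beta>" by blast
  define c where "c = (\<lambda>i::nat. if i = 0 then p else q)"
  have "z = (\<Sum>i<2. of_int (c i) * \<beta> ^ i)"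
    by (simp add: z numeral_2_eq_2 c_def)
  then show "z \<in> Zbeta \<beta>" unfolding Zbeta_def by blast
qed

lemma uniq:
  assumes u: "\<forall>n. u n < b" "\<forall>n. \<exists>z\<in>Zbeta \<beta>. x - (\<Sum>i<n. real (u i) * \<beta> ^ i) = \<beta> ^ n * z"
    and v: "\<forall>n. v n < b" "\<forall>n. \<exists>z\<in>Zbeta \<beta>. x - (\<Sum>i<n. real (v i) * \<beta> ^ i) = \<beta> ^ n * z"
  shows "u n = v n"
proof (induction n rule: less_induct)
  case (less n)
  then have sm: "(\<Sum>i<n. real (u i) * \<beta> ^ i) = (\<Sum>i<n. real (v i) * \<beta> ^ i)" by simp
  obtain z1 where z1: "z1 \<in> Zbeta \<beta>" "x - (\<Sum>i<Suc n. real (u i) * \<beta> ^ i) = \<beta> ^ Suc n * z1" using u(2) by blast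
  obtain z2 where z2: "z2 \<in> Zbeta \<beta>" "x - (\<Sum>i<Suc n. real (v i) * \<beta> ^ i) = \<beta> ^ Suc n * z2" using v(2) by blast
  have "\<beta>^n * (real (v n) - real (u n)) = \<beta>^n * (\<beta> * (z1 - z2))"
    using z1(2) z2(2) sm by (simp add: algebra_simps)
  then have e: "real (v n) - real (u n) = \<beta> * (z1 - z2)" using b1 by simp
  obtain p1 q1 where "z1 = of_int p1 + of_int q1 * \<beta>" using z1(1) Zbeta_char by blast
  moreover obtain p2 q2 where "z2 = of_int p2 + of_int q2 * \<beta>" using z2(1) Zbeta_char by blast
  ultimately have "z1 - z2 = of_int (p1 - p2) + of_int (q1 - q2) * \<beta>" by (simp add: algebra_simps)
  then obtain p q where zz: "z1 - z2 = of_int p + of_int q * \<beta>" by blast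
  have "\<beta> * (z1 - z2) = of_int p * \<beta> + of_int q * (\<beta> * \<beta>)" by (simp add: zz algebra_simps)
  also have "\<dots> = of_int (q * int b) + of_int (p + q * int a) * \<beta>" unfolding beq' by (simp add: algebra_simps)
  finally have "of_int (q * int b - (int (v n) - int (u n))) + of_int (p + q * int a) * \<beta> = 0"
    using e by simp
  then have h: "q * int b = int (v n) - int (u n)" using irrat by fastforce
  have h1: "int (u n) < int b" "int (v n) < int b" using u(1) v(1) by auto
  have "\<not> q \<ge> 1"
  proof
    assume "q \<ge> 1"
    then have "q * int b \<ge> 1 * int b" by (intro mult_right_mono) auto
    then show False using h h1 by linarith
  qed
  moreover have "\<not> q \<le> -1"
  proof
    assume "q \<le> -1"
    then have "q * int b \<le> (-1) * int b" by (intro mult_right_mono) auto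
    then show False using h h1 by linarith
  qed
  ultimately have "q = 0" by linarith
  then show ?case using h by simp
qed

end



lemma geo_bounds:
  fixes x D :: real
  assumes x: "-1 < x" "x < 0" and u: "\<And>i. real (u i) \<le> D"
  shows "summable (\<lambda>i. real (u i) * x^i)"
    and "(\<Sum>i. real (u i) * x^i) \<ge> D * x / (1 - x\<^sup>2)"
    and "(\<Sum>i. real (u i) * x^i) \<le> D / (1 - x\<^sup>2)"
proof -
  have ax: "(abs x) = -x" using x by simp
  have g1: "(\<lambda>i. x^i) sums (1 / (1 - x))" using x by (intro geometric_sums) simp
  have g2: "(\<lambda>i. (abs x)^i) sums (1 / (1 + x))"
  proof -
    have "(\<lambda>i. (abs x)^i) sums (1 / (1 - (abs x)))" by (rule geometric_sums) (use x in simp)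
    then show ?thesis using ax by simp
  qed
  have D0: "D \<ge> 0" using u[of 0] by linarith
  show sf: "summable (\<lambda>i. real (u i) * x^i)"
  proof (rule summable_comparison_test')
    show "summable (\<lambda>i. D * (abs x)^i)" using g2 by (intro summable_mult) (rule sums_summable)
    fix i show "norm (real (u i) * x^i) \<le> D * (abs x)^i"
      using u[of i] by (simp add: abs_mult power_abs mult_right_mono)
  qed
  have slo: "(\<lambda>i. D/2 * (x^i - (abs x)^i)) sums (D/2 * (1 / (1 - x) - 1 / (1 + x)))"
    by (intro sums_mult sums_diff g1 g2)
  have shi: "(\<lambda>i. D/2 * (x^i + (abs x)^i)) sums (D/2 * (1 / (1 - x) + 1 / (1 + x)))"
    by (intro sums_mult sums_add g1 g2)
  have e1: "D/2 * (1 / (1 - x) - 1 / (1 + x)) = D * x / (1 - x\<^sup>2)"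
    using x by (simp add: field_simps power2_eq_square)
  have e2: "D/2 * (1 / (1 - x) + 1 / (1 + x)) = D / (1 - x\<^sup>2)"
    using x by (simp add: field_simps power2_eq_square)
  have pw: "\<And>i. (even i \<and> (abs x)^i = x^i \<and> x^i \<ge> 0) \<or> (odd i \<and> (abs x)^i = - (x^i) \<and> x^i \<le> 0)"
  proof -
    fix i :: nat
    show "(even i \<and> (abs x)^i = x^i \<and> x^i \<ge> 0) \<or> (odd i \<and> (abs x)^i = - (x^i) \<and> x^i \<le> 0)"
    proof (cases "even i")
      case True then show ?thesis by (simp add: power_even_abs zero_le_even_power)
    next
      case False
      then have "x^i < 0" using x by (simp add: power_less_zero_eq)
      moreover have "\<bar>x^i\<bar> = (abs x)^i" by (simp add: power_abs)
      ultimately show ?thesis using False by simp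
    qed
  qed
  have lo: "\<And>i. D/2 * (x^i - (abs x)^i) \<le> real (u i) * x^i"
  proof -
    fix i
    show "D/2 * (x^i - (abs x)^i) \<le> real (u i) * x^i"
      using pw[of i]
    proof
      assume "even i \<and> (abs x)^i = x^i \<and> x^i \<ge> 0" then show ?thesis by simp
    next
      assume h: "odd i \<and> (abs x)^i = - (x^i) \<and> x^i \<le> 0"
      then have "D * x^i \<le> real (u i) * x^i" using u[of i] by (intro mult_right_mono_neg) auto
      then show ?thesis using h by simp
    qed
  qed
  have hi: "\<And>i. real (u i) * x^i \<le> D/2 * (x^i + (abs x)^i)"
  proof -
    fix i
    show "real (u i) * x^i \<le> D/2 * (x^i + (abs x)^i)"
      using pw[of i]
    proof
      assume h: "even i \<and> (abs x)^i = x^i \<and> x^i \<ge> 0"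
      then have "real (u i) * x^i \<le> D * x^i" using u[of i] by (intro mult_right_mono) auto
      then show ?thesis using h by simp
    next
      assume h: "odd i \<and> (abs x)^i = - (x^i) \<and> x^i \<le> 0"
      then show ?thesis by (simp add: mult_nonneg_nonpos)
    qed
  qed
  show "(\<Sum>i. real (u i) * x^i) \<ge> D * x / (1 - x\<^sup>2)"
    using suminf_le[OF lo sums_summable[OF slo] sf] sums_unique[OF slo] e1 by simp
  show "(\<Sum>i. real (u i) * x^i) \<le> D / (1 - x\<^sup>2)"
    using suminf_le[OF hi sf sums_summable[OF shi]] sums_unique[OF shi] e2 by simp
qed

lemma P_split:
  fixes x :: real
  assumes "summable (\<lambda>i. real (u i) * x^i)" and x0: "x \<noteq> 0"
  shows "P_inf u x = P_pref u K x + x^K * P_inf (\<lambda>i. u (i + K)) x"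
proof -
  have s2: "summable (\<lambda>i. real (u (i + K)) * x^i)"
  proof -
    have "summable (\<lambda>i. real (u (i + K)) * x^(i+K))" using assms(1) by (subst summable_iff_shift) 
    then have "summable (\<lambda>i. inverse (x^K) * (real (u (i + K)) * x^(i+K)))" by (rule summable_mult)
    moreover have "\<And>i. inverse (x^K) * (real (u (i + K)) * x^(i+K)) = real (u (i + K)) * x^i"
      using x0 by (simp add: power_add)
    ultimately show ?thesis by simp
  qed
  have "P_inf u x = (\<Sum>n. real (u (n + K)) * x^(n+K)) + P_pref u K x"
    unfolding P_inf_def P_pref_def by (rule suminf_split_initial_segment[OF assms(1)])
  also have "(\<Sum>n. real (u (n + K)) * x^(n+K)) = (\<Sum>n. x^K * (real (u (n + K)) * x^n))"
    by (simp add: power_add mult_ac)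
  also have "\<dots> = x^K * P_inf (\<lambda>i. u (i + K)) x" unfolding P_inf_def by (rule suminf_mult[OF s2])
  finally show ?thesis by simp
qed




context ctx begin

lemma hh_lt: "hh j n < b"
proof -
  have "dg (int a) (int b) n (j,0) < int b" "0 \<le> dg (int a) (int b) n (j,0)"
    using B0 by (simp_all add: dg_def)
  then show ?thesis unfolding hh_def by simp
qed

lemma hh_real: "real (hh j n) = of_int (dg (int a) (int b) n (j,0))"
proof -
  have "0 \<le> dg (int a) (int b) n (j,0)" using B0 by (simp add: dg_def)
  then show ?thesis unfolding hh_def by simp
qed

lemma hh_prop: "\<forall>n. \<exists>z\<in>Zbeta \<beta>. of_int j - (\<Sum>i<n. real (hh j i) * \<beta> ^ i) = \<beta> ^ n * z"
proof
  fix n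
  have "val (j,0) = (\<Sum>i<n. of_int (dg (int a) (int b) i (j,0)) * \<beta>^i) + \<beta>^n * val ((stp (int a) (int b) ^^ n) (j,0))"
    by (rule exp_id)
  moreover have "val ((stp (int a) (int b) ^^ n) (j,0)) \<in> Zbeta \<beta>" unfolding Zbeta_char val_def by blast
  ultimately show "\<exists>z\<in>Zbeta \<beta>. of_int j - (\<Sum>i<n. real (hh j i) * \<beta> ^ i) = \<beta> ^ n * z"
    by (auto simp: hh_real val_def)
qed

lemma bexp: "beta_expansion \<beta> b (of_int j) = hh j"
  unfolding beta_expansion_def
proof (rule the_equality)
  show "(\<forall>n. hh j n < b) \<and> (\<forall>n. \<exists>z\<in>Zbeta \<beta>. of_int j - (\<Sum>i<n. real (hh j i) * \<beta> ^ i) = \<beta> ^ n * z)"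
    using hh_lt hh_prop by blast
  fix u assume h: "(\<forall>n. u n < b) \<and> (\<forall>n. \<exists>z\<in>Zbeta \<beta>. of_int j - (\<Sum>i<n. real (u i) * \<beta> ^ i) = \<beta> ^ n * z)"
  have h1: "\<forall>n. u n < b" using h by simp
  have h2: "\<forall>n. \<exists>z\<in>Zbeta \<beta>. of_int j - (\<Sum>i<n. real (u i) * \<beta> ^ i) = \<beta> ^ n * z" using h by simp
  have h3: "\<forall>n. hh j n < b" using hh_lt by simp
  show "u = hh j" by (rule ext, rule uniq[OF h1 h2 h3 hh_prop])
qed

lemma hh_le: "real (hh j i) \<le> real b - 1"
proof -
  have "Suc (hh j i) \<le> b" using hh_lt[of j i] by simp
  then have "real (Suc (hh j i)) \<le> real b" by (simp only: of_nat_le_iff)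
  then show ?thesis by simp
qed

lemma bp0: "\<beta>' \<noteq> 0" using bp_neg by simp

lemma cint: "int a = int b * int (a div b)"
proof -
  have e: "b * (a div b) = a" using bdvd by simp
  show ?thesis unfolding of_nat_mult[symmetric] e ..
qed

lemma hh_prefix: assumes "i < 2*n" shows "hh j i = hh (j mod int b ^ n) i"
proof -
  have "dg (int a) (int b) i (j,0) = dg (int a) (int b) i (j mod int b ^ n, 0)"
    by (rule prefix_mod[OF B0 cint assms])
  then show ?thesis unfolding hh_def by (simp only:)
qed

lemma lower:
  shows "P_inf (hh j) \<beta>' \<ge> P_pref (hh j) (2*n) \<beta>' + \<beta>'^(2*n) * ((real b - 1) * \<beta>' / (1 - \<beta>'\<^sup>2))"
proof -
  note gb = geo_bounds[OF bp_gt bp_neg, of "hh j" "real b - 1", OF hh_le]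
  note gb2 = geo_bounds[OF bp_gt bp_neg, of "\<lambda>i. hh j (i + 2*n)" "real b - 1", OF hh_le]
  have "P_inf (hh j) \<beta>' = P_pref (hh j) (2*n) \<beta>' + \<beta>'^(2*n) * P_inf (\<lambda>i. hh j (i + 2*n)) \<beta>'"
    by (rule P_split[OF gb(1) bp0])
  moreover have "\<beta>'^(2*n) * ((real b - 1) * \<beta>' / (1 - \<beta>'\<^sup>2)) \<le> \<beta>'^(2*n) * P_inf (\<lambda>i. hh j (i + 2*n)) \<beta>'"
    using gb2(2) unfolding P_inf_def by (intro mult_left_mono) (auto simp: zero_le_even_power)
  ultimately show ?thesis by simp
qed

lemma upper:
  assumes "\<forall>i. 2*n \<le> i \<and> i < 2*n + 2*N \<and> even i \<longrightarrow> hh j i = 0"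
  shows "P_inf (hh j) \<beta>' \<le> P_pref (hh j) (2*n) \<beta>' + (\<beta>'\<^sup>2)^N * ((real b - 1) / (1 - \<beta>'\<^sup>2))"
proof -
  define K where "K = 2*n + 2*N"
  note gb = geo_bounds[OF bp_gt bp_neg, of "hh j" "real b - 1", OF hh_le]
  note gb2 = geo_bounds[OF bp_gt bp_neg, of "\<lambda>i. hh j (i + K)" "real b - 1", OF hh_le]
  have x2: "0 \<le> \<beta>'\<^sup>2" "\<beta>'\<^sup>2 < 1" using bp_gt bp_neg by (auto simp: abs_square_less_1)
  have D: "0 \<le> (real b - 1) / (1 - \<beta>'\<^sup>2)" using x2 b2 by simp
  have sp: "P_inf (hh j) \<beta>' = P_pref (hh j) K \<beta>' + \<beta>'^K * P_inf (\<lambda>i. hh j (i + K)) \<beta>'"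
    by (rule P_split[OF gb(1) bp0])
  have "\<beta>'^K * P_inf (\<lambda>i. hh j (i + K)) \<beta>' \<le> \<beta>'^K * ((real b - 1) / (1 - \<beta>'\<^sup>2))"
    using gb2(3) unfolding P_inf_def by (intro mult_left_mono) (auto simp: K_def zero_le_even_power)
  also have "\<dots> \<le> (\<beta>'\<^sup>2)^N * ((real b - 1) / (1 - \<beta>'\<^sup>2))"
  proof (rule mult_right_mono[OF _ D])
    have "\<beta>'^K = (\<beta>'\<^sup>2)^n * (\<beta>'\<^sup>2)^N" by (simp add: K_def power_add power_mult)
    also have "\<dots> \<le> 1 * (\<beta>'\<^sup>2)^N" using x2 by (intro mult_right_mono) (auto simp: power_le_one)
    finally show "\<beta>'^K \<le> (\<beta>'\<^sup>2)^N" by simp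
  qed
  finally have t1: "\<beta>'^K * P_inf (\<lambda>i. hh j (i + K)) \<beta>' \<le> (\<beta>'\<^sup>2)^N * ((real b - 1) / (1 - \<beta>'\<^sup>2))" .
  have "P_pref (hh j) K \<beta>' = P_pref (hh j) (2*n) \<beta>' + (\<Sum>i\<in>{2*n..<K}. real (hh j i) * \<beta>'^i)"
    unfolding P_pref_def lessThan_atLeast0 K_def by (subst sum.atLeastLessThan_concat[symmetric, of 0 "2*n"]) auto
  moreover have "(\<Sum>i\<in>{2*n..<K}. real (hh j i) * \<beta>'^i) \<le> 0"
  proof (rule sum_nonpos)
    fix i assume i: "i \<in> {2*n..<K}"
    show "real (hh j i) * \<beta>'^i \<le> 0"
    proof (cases "even i")
      case True then show ?thesis using assms i K_def by auto
    next
      case False then have "\<beta>'^i < 0" using bp_neg by (simp add: power_less_zero_eq)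
      then have "\<beta>'^i \<le> 0" by linarith
      then show ?thesis by (rule mult_nonneg_nonpos[rotated]) simp
    qed
  qed
  ultimately show ?thesis using sp t1 by linarith
qed

end



context ctx begin

theorem main:
  "\<exists>t\<in>{\<beta>'..0}.
    (INF j::int. P_inf (beta_expansion \<beta> b (of_int j)) \<beta>') =
      Min ((\<lambda>j. P_pref (beta_expansion \<beta> b (real j)) (2 * n) \<beta>') ` {0..<b ^ n})
      + \<beta>' ^ (2 * n) * ((real b - 1) / (1 - \<beta>'\<^sup>2)) * t"
proof -
  have e1: "(\<lambda>j::int. P_inf (beta_expansion \<beta> b (of_int j)) \<beta>') = (\<lambda>j. P_inf (hh j) \<beta>')"
    by (simp add: bexp)
  have e2: "\<And>j::nat. beta_expansion \<beta> b (real j) = hh (int j)"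
  proof -
    fix j :: nat
    have "beta_expansion \<beta> b (real j) = beta_expansion \<beta> b (of_int (int j))" by simp
    then show "beta_expansion \<beta> b (real j) = hh (int j)" by (simp only: bexp)
  qed
  define F where "F j = P_inf (hh j) \<beta>'" for j
  define S where "S = (\<lambda>j. P_pref (hh (int j)) (2 * n) \<beta>') ` {0..<b ^ n}"
  define mu where "mu = Min S"
  define D where "D = real b - 1"
  define c where "c = \<beta>' ^ (2 * n) * (D / (1 - \<beta>'\<^sup>2))"
  have x2: "0 \<le> \<beta>'\<^sup>2" "\<beta>'\<^sup>2 < 1" using bp_gt bp_neg by (auto simp: abs_square_less_1)
  have Dq: "D / (1 - \<beta>'\<^sup>2) > 0" using x2 b2 by (simp add: D_def)
  have "0 < \<beta>'\<^sup>2" using bp0 by simp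
  then have "0 < (\<beta>'\<^sup>2)^n" by simp
  then have p0: "0 < \<beta>'^(2*n)" by (simp add: power_mult)
  have c0: "c > 0" unfolding c_def using Dq p0 by (rule mult_pos_pos[rotated])
  have finS: "finite S" "S \<noteq> {}" using b2 by (auto simp: S_def)
  have low: "mu + c * \<beta>' \<le> F j" for j
  proof -
    define r where "r = nat (j mod int b ^ n)"
    have r1: "int r = j mod int b ^ n" using B0 by (simp add: r_def)
    have r2: "r \<in> {0..<b^n}"
    proof -
      have "j mod int b ^ n < int b ^ n" using B0 by simp
      then have "int r < int (b^n)" using r1 by simp
      then show ?thesis by simp
    qed
    have "P_pref (hh j) (2*n) \<beta>' = P_pref (hh (int r)) (2*n) \<beta>'"
      unfolding P_pref_def r1 using hh_prefix[of _ n j] by (intro sum.cong) auto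
    then have "mu \<le> P_pref (hh j) (2*n) \<beta>'" unfolding mu_def S_def using r2 finS by (intro Min_le) (auto simp: S_def)
    moreover have "F j \<ge> P_pref (hh j) (2*n) \<beta>' + \<beta>'^(2*n) * ((real b - 1) * \<beta>' / (1 - \<beta>'\<^sup>2))"
      unfolding F_def by (rule lower)
    moreover have "\<beta>'^(2*n) * ((real b - 1) * \<beta>' / (1 - \<beta>'\<^sup>2)) = c * \<beta>'"
      by (simp add: c_def D_def)
    ultimately show ?thesis by linarith
  qed
  have bdd: "bdd_below (range F)" using low by (intro bdd_belowI2) 
  define I where "I = (INF j. F j)"
  have I1: "mu + c * \<beta>' \<le> I" unfolding I_def using low by (intro cINF_greatest) auto
  have I2: "I \<le> mu"
  proof (rule field_le_epsilon)
    fix \<delta> :: real assume d: "0 < \<delta>"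
    obtain r0 where r0: "r0 \<in> {0..<b^n}" "mu = P_pref (hh (int r0)) (2 * n) \<beta>'"
      using Min_in[OF finS] unfolding mu_def S_def by auto
    obtain N where N: "(\<beta>'\<^sup>2)^N < \<delta> / (D / (1 - \<beta>'\<^sup>2))"
      using real_arch_pow_inv[OF _ x2(2)] d Dq by (metis divide_pos_pos)
    obtain j where j1: "\<forall>i<2*n. dg (int a) (int b) i (j,0) = dg (int a) (int b) i (int r0,0)"
      and j2: "\<forall>i. 2*n \<le> i \<and> i < 2*n + 2*N \<and> even i \<longrightarrow> dg (int a) (int b) i (j,0) = 0"
      using construct[OF B0 cint, of n "int r0" N] by blast
    have j2': "\<forall>i. 2*n \<le> i \<and> i < 2*n + 2*N \<and> even i \<longrightarrow> hh j i = 0" using j2 by (simp add: hh_def)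
    have "P_pref (hh j) (2*n) \<beta>' = P_pref (hh (int r0)) (2*n) \<beta>'"
      unfolding P_pref_def using j1 by (intro sum.cong) (auto simp: hh_def)
    then have "F j \<le> mu + (\<beta>'\<^sup>2)^N * (D / (1 - \<beta>'\<^sup>2))"
      using upper[OF j2'] r0(2) unfolding F_def D_def by simp
    also have "(\<beta>'\<^sup>2)^N * (D / (1 - \<beta>'\<^sup>2)) < \<delta>" using iffD1[OF pos_less_divide_eq[OF Dq] N] .
    finally have "F j < mu + \<delta>" by simp
    moreover have "I \<le> F j" unfolding I_def by (rule cINF_lower[OF bdd]) simp
    ultimately show "I \<le> mu + \<delta>" by simp
  qed
  define t where "t = (I - mu) / c"
  have t1: "\<beta>' \<le> t" unfolding t_def using I1 c0 by (simp add: pos_le_divide_eq mult.commute)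
  have t2: "t \<le> 0" unfolding t_def using I2 c0 by (simp add: divide_nonpos_pos)
  have t3: "I = mu + c * t" unfolding t_def using c0 by simp
  show ?thesis
  proof (rule bexI[of _ t])
    show "t \<in> {\<beta>'..0}" using t1 t2 by simp
    have "(\<lambda>j. P_pref (beta_expansion \<beta> b (real j)) (2 * n) \<beta>') ` {0..<b ^ n} = S"
      unfolding S_def e2 ..
    then show "(INF j::int. P_inf (beta_expansion \<beta> b (of_int j)) \<beta>') =
      Min ((\<lambda>j. P_pref (beta_expansion \<beta> b (real j)) (2 * n) \<beta>') ` {0..<b ^ n})
      + \<beta>' ^ (2 * n) * ((real b - 1) / (1 - \<beta>'\<^sup>2)) * t"
      unfolding e1 using t3 by (simp add: I_def F_def mu_def c_def D_def)
  qed
qed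

end


theorem proposition6:
  fixes a b :: nat and \<beta> \<beta>' :: real and n :: nat
  assumes "a \<ge> b" and "b \<ge> 2" and "b dvd a"
    and "\<beta> > 1" and "\<beta>\<^sup>2 = real a * \<beta> + real b"
    and "\<beta>' = real a - \<beta>"
  shows "\<exists>t\<in>{\<beta>'..0}.
    (INF j::int. P_inf (beta_expansion \<beta> b (of_int j)) \<beta>') =
      Min ((\<lambda>j. P_pref (beta_expansion \<beta> b (real j)) (2 * n) \<beta>') ` {0..<b ^ n})
      + \<beta>' ^ (2 * n) * ((real b - 1) / (1 - \<beta>'\<^sup>2)) * t"
proof -
  have "ctx a b \<beta> \<beta>'" by (rule ctx.intro[OF assms])
  then show ?thesis by (rule ctx.main)
qed

end
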